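(* Let $\mathbb{Z}[i]$ be the ring of Gaussian integers. For all $r\ge1$ and all primes $p$, $H^2(\Gamma(SL_2(\mathbb{Z}[i]),p^r);\mathbb{F}_p)$ contains a subspace isomorphic to $\mathbb{F}_p\oplus\mathbb{F}_p$; that is, it has dimension at least $2$ over $\mathbb{F}_p$.
   Context: $\Gamma(SL_2(\mathbb{Z}[i]),p^r)=\ker\big(SL_2(\mathbb{Z}[i])\to SL_2(\mathbb{Z}[i]\otimes_{\mathbb{Z}}\mathbb{Z}/p^r)\big)$; cohomology is group cohomology with trivial coefficients $\mathbb{F}_p$. *)

theory Defs
  imports "HOL-Analysis.Analysis" "HOL-Number_Theory.Cong"
begin

definition gauss_int :: "complex \<Rightarrow> bool" where
  "gauss_int z \<longleftrightarrow> Re z \<in> \<int> \<and> Im z \<in> \<int>"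

definition SL2_Zi :: "(complex^2^2) set" where
  "SL2_Zi = {A. (\<forall>i j. gauss_int (A $ i $ j)) \<and> det A = 1}"

text \<open>Principal congruence subgroup of level m: the kernel of reduction
  SL_2(Z[i]) -> SL_2(Z[i]/m Z[i]) = SL_2(Z[i] tensor Z/m), i.e. A = I mod m Z[i].\<close>
definition Gamma_cong :: "nat \<Rightarrow> (complex^2^2) set" where
  "Gamma_cong m = {A \<in> SL2_Zi. \<forall>i j. gauss_int ((A - mat 1) $ i $ j / of_nat m)}"

text \<open>Inhomogeneous 2-cochains of a group (carrier G, multiplication gmul) with
  trivial coefficients in F_p; F_p-values represented by integers modulo p.\<close>
definition cocycle2 :: "('g \<Rightarrow> 'g \<Rightarrow> 'g) \<Rightarrow> 'g set \<Rightarrow> nat \<Rightarrow> ('g \<Rightarrow> 'g \<Rightarrow> int) \<Rightarrow> bool" where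
  "cocycle2 gmul G p f \<longleftrightarrow>
     (\<forall>g\<in>G. \<forall>h\<in>G. \<forall>k\<in>G.
        [f h k - f (gmul g h) k + f g (gmul h k) - f g h = 0] (mod int p))"

definition coboundary2 :: "('g \<Rightarrow> 'g \<Rightarrow> 'g) \<Rightarrow> 'g set \<Rightarrow> nat \<Rightarrow> ('g \<Rightarrow> 'g \<Rightarrow> int) \<Rightarrow> bool" where
  "coboundary2 gmul G p f \<longleftrightarrow>
     (\<exists>\<phi> :: 'g \<Rightarrow> int. \<forall>g\<in>G. \<forall>h\<in>G.
        [f g h = \<phi> h - \<phi> (gmul g h) + \<phi> g] (mod int p))"

text \<open>dim_{F_p} H^2(G; F_p) = Z^2/B^2 is at least 2: there are two cocycles whose
  classes are F_p-linearly independent in Z^2/B^2 (equivalently, H^2 contains a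
  subspace isomorphic to F_p + F_p).\<close>
definition H2_Fp_dim_ge2 :: "('g \<Rightarrow> 'g \<Rightarrow> 'g) \<Rightarrow> 'g set \<Rightarrow> nat \<Rightarrow> bool" where
  "H2_Fp_dim_ge2 gmul G p \<longleftrightarrow>
     (\<exists>c1 c2. cocycle2 gmul G p c1 \<and> cocycle2 gmul G p c2 \<and>
        (\<forall>a b :: int. coboundary2 gmul G p (\<lambda>g h. a * c1 g h + b * c2 g h) \<longrightarrow>
             [a = 0] (mod int p) \<and> [b = 0] (mod int p)))"

end

theory Submission imports Defs begin

lemma gauss_add[intro]: "gauss_int x \<Longrightarrow> gauss_int y \<Longrightarrow> gauss_int (x+y)"
  by (simp add: gauss_int_def)
lemma gauss_mult[intro]: "gauss_int x \<Longrightarrow> gauss_int y \<Longrightarrow> gauss_int (x*y)"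
  by (simp add: gauss_int_def)

definition D :: "nat \<Rightarrow> complex^2^2 \<Rightarrow> 2 \<Rightarrow> 2 \<Rightarrow> complex" where
  "D m A i j = (A - mat 1) $ i $ j / of_nat m"

lemma D_gauss: "A \<in> Gamma_cong m \<Longrightarrow> gauss_int (D m A i j)"
  by (simp add: Gamma_cong_def D_def)

lemma entry: "m > 0 \<Longrightarrow> A $ i $ j = (if i = j then 1 else 0) + of_nat m * D m A i j"
  by (simp add: D_def mat_def)

lemma D_mult:
  assumes "A \<in> Gamma_cong m" "B \<in> Gamma_cong m" "m > 0"
  shows "D m (A ** B) i j = D m A i j + D m B i j + of_nat m * (\<Sum>k\<in>UNIV. D m A i k * D m B k j)"
proof -
  have e: "\<And>C i j. C $ i $ j = (if i = j then 1 else 0) + of_nat m * D m C i j" using assms(3) entry by blast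
  have "(A ** B) $ i $ j = (\<Sum>k\<in>UNIV. A$i$k * B$k$j)" by (simp add: matrix_matrix_mult_def)
  also have "\<dots> = (if i = j then 1 else 0) + of_nat m * (D m A i j + D m B i j + of_nat m * (\<Sum>k\<in>UNIV. D m A i k * D m B k j))"
    apply (subst (1 2) e)
    using exhaust_2[of i] exhaust_2[of j]
    by (auto simp: sum_2 algebra_simps)
  finally have "(A ** B) $ i $ j = \<dots>" .
  moreover have "(A ** B) $ i $ j = (if i = j then 1 else 0) + of_nat m * D m (A ** B) i j" using e by blast
  ultimately show ?thesis using assms(3) by simp
qed

lemma floor_dvd:
  assumes "x \<in> \<int>" "y \<in> \<int>" "w \<in> \<int>" "z = x + y + real m * w"
  shows "int m dvd (\<lfloor>z\<rfloor> - \<lfloor>x\<rfloor> - \<lfloor>y\<rfloor>)"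
proof -
  obtain a b c where "x = of_int a" "y = of_int b" "w = of_int c" using assms by (metis Ints_cases)
  then have "z = of_int (a + b + int m * c)" using assms(4) by simp
  then have "\<lfloor>z\<rfloor> - \<lfloor>x\<rfloor> - \<lfloor>y\<rfloor> = int m * c" using \<open>x = _\<close> \<open>y = _\<close> by (simp only: floor_of_int)
  then show ?thesis by simp
qed

definition alpha :: "nat \<Rightarrow> (complex \<Rightarrow> real) \<Rightarrow> 2 \<Rightarrow> 2 \<Rightarrow> complex^2^2 \<Rightarrow> int" where
  "alpha m cp i j A = \<lfloor>cp (D m A i j)\<rfloor>"

lemma alpha_hom:
  assumes "A \<in> Gamma_cong m" "B \<in> Gamma_cong m" "m > 0" "cp = Re \<or> cp = Im"
  shows "int m dvd (alpha m cp i j (A ** B) - alpha m cp i j A - alpha m cp i j B)"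
proof -
  define S where "S = (\<Sum>k\<in>UNIV. D m A i k * D m B k j)"
  have gS: "gauss_int S" unfolding S_def using D_gauss[OF assms(1)] D_gauss[OF assms(2)]
    by (simp add: sum_2 gauss_add gauss_mult)
  have eq: "D m (A ** B) i j = D m A i j + D m B i j + of_nat m * S"
    using D_mult[OF assms(1-3)] S_def by simp
  show ?thesis using assms(4)
  proof
    assume c: "cp = Re"
    show ?thesis unfolding alpha_def c
      apply (rule floor_dvd[where w="Re S"])
      using D_gauss[OF assms(1)] D_gauss[OF assms(2)] gS eq by (auto simp: gauss_int_def)
  next
    assume c: "cp = Im"
    show ?thesis unfolding alpha_def c
      apply (rule floor_dvd[where w="Im S"])
      using D_gauss[OF assms(1)] D_gauss[OF assms(2)] gS eq by (auto simp: gauss_int_def)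
  qed
qed

lemma cup_cocycle:
  assumes a: "\<And>g h. g \<in> G \<Longrightarrow> h \<in> G \<Longrightarrow> int p dvd (\<alpha> (gmul g h) - \<alpha> g - \<alpha> h)"
      and b: "\<And>g h. g \<in> G \<Longrightarrow> h \<in> G \<Longrightarrow> int p dvd (\<beta> (gmul g h) - \<beta> g - \<beta> h)"
  shows "cocycle2 gmul G p (\<lambda>g h. \<alpha> g * \<beta> h)"
  unfolding cocycle2_def cong_0_iff
proof (intro ballI)
  fix g h k assume "g \<in> G" "h \<in> G" "k \<in> G"
  have "\<alpha> h * \<beta> k - \<alpha> (gmul g h) * \<beta> k + \<alpha> g * \<beta> (gmul h k) - \<alpha> g * \<beta> h
     = - ((\<alpha> (gmul g h) - \<alpha> g - \<alpha> h) * \<beta> k) + \<alpha> g * (\<beta> (gmul h k) - \<beta> h - \<beta> k)"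
    by (simp add: algebra_simps)
  also have "int p dvd \<dots>" using a[OF \<open>g\<in>G\<close> \<open>h\<in>G\<close>] b[OF \<open>h\<in>G\<close> \<open>k\<in>G\<close>] by simp
  finally show "int p dvd (\<alpha> h * \<beta> k - \<alpha> (gmul g h) * \<beta> k + \<alpha> g * \<beta> (gmul h k) - \<alpha> g * \<beta> h)" .
qed

lemma cobound_comm:
  assumes "coboundary2 gmul G p f" "g \<in> G" "h \<in> G" "gmul g h = gmul h g"
  shows "int p dvd (f g h - f h g)"
proof -
  obtain \<phi> where "\<forall>g\<in>G. \<forall>h\<in>G. [f g h = \<phi> h - \<phi> (gmul g h) + \<phi> g] (mod int p)"
    using assms(1) unfolding coboundary2_def by blast
  then have "[f g h = \<phi> h - \<phi> (gmul g h) + \<phi> g] (mod int p)" "[f h g = \<phi> g - \<phi> (gmul h g) + \<phi> h] (mod int p)"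
    using assms(2,3) by auto
  then have "[f g h - f h g = (\<phi> h - \<phi> (gmul g h) + \<phi> g) - (\<phi> g - \<phi> (gmul h g) + \<phi> h)] (mod int p)"
    by (rule cong_diff)
  then show ?thesis using assms(4) by (simp add: cong_0_iff)
qed

definition U :: "nat \<Rightarrow> complex \<Rightarrow> complex^2^2" where
  "U m z = (\<chi> i j. if i = j then 1 else if i = 1 then of_nat m * z else 0)"
definition L :: "nat \<Rightarrow> complex \<Rightarrow> complex^2^2" where
  "L m z = (\<chi> i j. if i = j then 1 else if i = 2 then of_nat m * z else 0)"

lemma gauss_basic: "gauss_int 0" "gauss_int 1" "gauss_int \<i>" "gauss_int (of_nat n)"
  by (auto simp: gauss_int_def)

lemma U_mem: "m > 0 \<Longrightarrow> gauss_int z \<Longrightarrow> U m z \<in> Gamma_cong m"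
  unfolding Gamma_cong_def SL2_Zi_def
  by (auto simp: U_def det_2 forall_2 mat_def gauss_basic gauss_mult)
lemma L_mem: "m > 0 \<Longrightarrow> gauss_int z \<Longrightarrow> L m z \<in> Gamma_cong m"
  unfolding Gamma_cong_def SL2_Zi_def
  by (auto simp: L_def det_2 forall_2 mat_def gauss_basic gauss_mult)

lemma U_comm: "U m z ** U m w = U m w ** U m z"
  by (simp add: U_def vec_eq_iff forall_2 matrix_matrix_mult_def sum_2 algebra_simps)
lemma L_comm: "L m z ** L m w = L m w ** L m z"
  by (simp add: L_def vec_eq_iff forall_2 matrix_matrix_mult_def sum_2 algebra_simps)

lemma D_U: "m > 0 \<Longrightarrow> D m (U m z) 1 2 = z" "D m (U m z) 2 1 = 0"
  by (auto simp: D_def U_def mat_def)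
lemma D_L: "m > 0 \<Longrightarrow> D m (L m z) 2 1 = z" "D m (L m z) 1 2 = 0"
  by (auto simp: D_def L_def mat_def)

theorem theorem6p1:
  fixes p r :: nat
  assumes "prime p" and "r \<ge> 1"
  shows "H2_Fp_dim_ge2 (**) (Gamma_cong (p ^ r)) p"
proof -
  define m where "m = p ^ r"
  have m0: "m > 0" using assms(1) prime_gt_0_nat m_def by simp
  have pm: "int p dvd int m" using assms(2) unfolding m_def
    by (metis dvd_power le_iff_add of_nat_dvd_iff plus_1_eq_Suc zero_less_Suc) 
  define G where "G = Gamma_cong m"
  have hom: "\<And>cp i j g h. cp = Re \<or> cp = Im \<Longrightarrow> g \<in> G \<Longrightarrow> h \<in> G \<Longrightarrow>
      int p dvd (alpha m cp i j (g ** h) - alpha m cp i j g - alpha m cp i j h)"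
    using alpha_hom m0 pm dvd_trans unfolding G_def by blast
  define c1 where "c1 = (\<lambda>g h. alpha m Re 1 2 g * alpha m Im 1 2 h)"
  define c2 where "c2 = (\<lambda>g h. alpha m Re 2 1 g * alpha m Im 2 1 h)"
  have cc1: "cocycle2 (**) G p c1" unfolding c1_def by (rule cup_cocycle) (auto intro: hom)
  have cc2: "cocycle2 (**) G p c2" unfolding c2_def by (rule cup_cocycle) (auto intro: hom)
  have indep: "[a = 0] (mod int p) \<and> [b = 0] (mod int p)"
    if cb: "coboundary2 (**) G p (\<lambda>g h. a * c1 g h + b * c2 g h)" for a b
  proof -
    have u1: "U m 1 \<in> G" and ui: "U m \<i> \<in> G" and l1: "L m 1 \<in> G" and li: "L m \<i> \<in> G"
      unfolding G_def using U_mem L_mem m0 gauss_basic by auto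
    have "int p dvd ((\<lambda>g h. a * c1 g h + b * c2 g h) (U m 1) (U m \<i>) - (\<lambda>g h. a * c1 g h + b * c2 g h) (U m \<i>) (U m 1))"
      by (rule cobound_comm[OF cb u1 ui U_comm])
    then have A: "int p dvd a" using m0 by (simp add: c1_def c2_def alpha_def D_U)
    have "int p dvd ((\<lambda>g h. a * c1 g h + b * c2 g h) (L m 1) (L m \<i>) - (\<lambda>g h. a * c1 g h + b * c2 g h) (L m \<i>) (L m 1))"
      by (rule cobound_comm[OF cb l1 li L_comm])
    then have B: "int p dvd b" using m0 by (simp add: c1_def c2_def alpha_def D_L)
    show ?thesis using A B by (simp add: cong_0_iff)
  qed
  show ?thesis unfolding H2_Fp_dim_ge2_def m_def[symmetric] G_def[symmetric]
    using cc1 cc2 indep by blast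
qed

end
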